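(* If a choice probability function $q_1$ is QRUM-rationalizable, then it is APT-rationalizable (viewed as the function $q_1(p_1,y):=q_1(p_1)$ of price and income).
   Context: Two goods: good 0 with price $0$ and good 1 with price $p_1\ge0$; all consumers have common income $y>0$, choose one good and spend the remainder on a numeraire. The set of incomes and prices considered is such that prices are small relative to income (the paper writes $p_1\ll y$); in particular $0\le p_1\le y$, and the prices $p_L,p_H$ below lie in $[0,y]$ for every income $y$ considered. QRUM: $q_1$ (a function of price only) is QRUM-rationalizable if there exist a random variable $\eta$ with distribution $H$ and functions $V_0,V_1$, $\beta>0$ (utilities $U_0(y,\eta)=V_0(\eta)+\beta(\eta)y$, $U_1(y-p_1,\eta)=V_1(\eta)+\beta(\eta)(y-p_1)$) such that $q_1(p_1)=\int\mathbb{1}\{V_0(\eta)\le V_1(\eta)-\beta(\eta)p_1\}\,dH(\eta)$ for all $p_1$, where (i) for every $p_1$, $\int\mathbb{1}\{V_0(\eta)=V_1(\eta)-\beta(\eta)p_1\}\,dH(\eta)=0$; (ii) there exist $p_L$ with $\lim_{p_1\searrow p_L}\Pr[V_0(\eta)\le V_1(\eta)-\beta(\eta)p_1]=1$ and $p_H$ with $\lim_{p_1\nearrow p_H}\Pr[V_0(\eta)\le V_1(\eta)-\beta(\eta)p_1]=0$. APT: a function $q_1(p_1,y)$ is APT-rationalizable if there exist $U_0:(0,\infty)\to[0,\infty)$ non-decreasing, $U_1:[0,\infty)\to[0,\infty)$ continuous and strictly increasing, with: for every income $y$ there is $\bar p_1\in[0,y]$ with $U_0(y)\ge U_1(y-\bar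 p_1)$; and a CDF $G$ with $G(0)=0$, such that $q_{1}(p_{1},y)=\mathbb{1}\{U_{0}(y)<U_{1}(y-p_{1})\}\,(1-G(p_{1}))$ for all incomes $y$ and prices $p_1\in[0,y]$ considered. *)

theory Defs
  imports "HOL-Probability.Probability"
begin

definition prices_considered :: "real set \<Rightarrow> real set" where
  "prices_considered Y = {p. \<exists>y\<in>Y. 0 \<le> p \<and> p \<le> y}"

definition is_CDF :: "(real \<Rightarrow> real) \<Rightarrow> bool" where
  "is_CDF G \<longleftrightarrow> (\<exists>M. real_distribution M \<and> G = cdf M)"

definition QRUM_rationalizable :: "'e itself \<Rightarrow> real set \<Rightarrow> (real \<Rightarrow> real) \<Rightarrow> bool" where
  "QRUM_rationalizable (ty :: 'e itself) Y q1 \<longleftrightarrow>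
     (\<exists>(H :: 'e measure) V0 V1 \<beta>.
        prob_space H \<and>
        V0 \<in> borel_measurable H \<and> V1 \<in> borel_measurable H \<and> \<beta> \<in> borel_measurable H \<and>
        (\<forall>\<eta>\<in>space H. \<beta> \<eta> > 0) \<and>
        (\<forall>p\<in>prices_considered Y.
           q1 p = measure H {\<eta>\<in>space H. V0 \<eta> \<le> V1 \<eta> - \<beta> \<eta> * p}) \<and>
        (\<forall>p\<in>prices_considered Y.
           measure H {\<eta>\<in>space H. V0 \<eta> = V1 \<eta> - \<beta> \<eta> * p} = 0) \<and>
        (\<exists>pL pH. (\<forall>y\<in>Y. 0 \<le> pL \<and> pL \<le> y \<and> 0 \<le> pH \<and> pH \<le> y) \<and>
           ((\<lambda>p. measure H {\<eta>\<in>space H. V0 \<eta> \<le> V1 \<eta> - \<beta> \<eta> * p}) \<longlongrightarrow> 1) (at_right pL) \<and>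
           ((\<lambda>p. measure H {\<eta>\<in>space H. V0 \<eta> \<le> V1 \<eta> - \<beta> \<eta> * p}) \<longlongrightarrow> 0) (at_left pH)))"

definition APT_rationalizable :: "real set \<Rightarrow> (real \<Rightarrow> real \<Rightarrow> real) \<Rightarrow> bool" where
  "APT_rationalizable Y q1 \<longleftrightarrow>
     (\<exists>(U0 :: real \<Rightarrow> real) (U1 :: real \<Rightarrow> real) (G :: real \<Rightarrow> real).
        mono_on {0<..} U0 \<and> (\<forall>y>0. U0 y \<ge> 0) \<and>
        continuous_on {0..} U1 \<and> strict_mono_on {0..} U1 \<and> (\<forall>x\<ge>0. U1 x \<ge> 0) \<and>
        (\<forall>y\<in>Y. \<exists>pbar. 0 \<le> pbar \<and> pbar \<le> y \<and> U0 y \<ge> U1 (y - pbar)) \<and>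
        is_CDF G \<and> G 0 = 0 \<and>
        (\<forall>y\<in>Y. \<forall>p1. 0 \<le> p1 \<and> p1 \<le> y \<longrightarrow>
           q1 p1 y = (if U0 y < U1 (y - p1) then 1 else 0) * (1 - G p1)))"

end

theory Submission
  imports Defs
begin

lemma empty_case:
  fixes q1 :: "real \<Rightarrow> real"
  shows "APT_rationalizable {} (\<lambda>p1 y. q1 p1)"
proof -
  have rd: "real_distribution (return borel (1::real))"
    unfolding real_distribution_def real_distribution_axioms_def
    by (auto intro: prob_space_return)
  have "cdf (return borel (1::real)) 0 = 0"
    unfolding cdf_def by (simp add: measure_return)
  then show ?thesis unfolding APT_rationalizable_def is_CDF_def
    using rd
    apply (rule_tac x="\<lambda>_. 0" in exI)
    apply (rule_tac x="\<lambda>x. x" in exI)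
    apply (rule_tac x="cdf (return borel (1::real))" in exI)
    by (auto simp: mono_on_def strict_mono_on_def continuous_on_id)
qed

theorem theorem3:
  fixes Y :: "real set" and q1 :: "real \<Rightarrow> real"
  assumes "Y \<subseteq> {0<..}"
    and "QRUM_rationalizable TYPE('e) Y q1"
  shows "APT_rationalizable Y (\<lambda>p1 y. q1 p1)"
proof (cases "Y = {}")
  case True
  then show ?thesis using empty_case by simp
next
  case False
  then obtain y0 where y0: "y0 \<in> Y" by auto
  obtain H :: "'e measure" and V0 V1 \<beta> pL pH where
    ps: "prob_space H" and m0: "V0 \<in> borel_measurable H" and m1: "V1 \<in> borel_measurable H"
    and mb: "\<beta> \<in> borel_measurable H" and bpos: "\<forall>\<eta>\<in>space H. \<beta> \<eta> > 0"
    and q: "\<forall>p\<in>prices_considered Y.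
           q1 p = measure H {\<eta>\<in>space H. V0 \<eta> \<le> V1 \<eta> - \<beta> \<eta> * p}"
    and z: "\<forall>p\<in>prices_considered Y.
           measure H {\<eta>\<in>space H. V0 \<eta> = V1 \<eta> - \<beta> \<eta> * p} = 0"
    and pLH: "\<forall>y\<in>Y. 0 \<le> pL \<and> pL \<le> y \<and> 0 \<le> pH \<and> pH \<le> y"
    and limL: "((\<lambda>p. measure H {\<eta>\<in>space H. V0 \<eta> \<le> V1 \<eta> - \<beta> \<eta> * p}) \<longlongrightarrow> 1) (at_right pL)"
    and limH: "((\<lambda>p. measure H {\<eta>\<in>space H. V0 \<eta> \<le> V1 \<eta> - \<beta> \<eta> * p}) \<longlongrightarrow> 0) (at_left pH)"
    using assms(2) unfolding QRUM_rationalizable_def by blast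
  interpret prob_space H by (rule ps)
  define F where "F p = measure H {\<eta>\<in>space H. V0 \<eta> \<le> V1 \<eta> - \<beta> \<eta> * p}" for p
  define X where "X \<eta> = (V1 \<eta> - V0 \<eta>) / \<beta> \<eta>" for \<eta>
  have mX: "X \<in> borel_measurable H" unfolding X_def using m0 m1 mb by measurable
  have Fmono: "F p \<le> F p'" if "p' \<le> p" for p p'
    unfolding F_def
  proof (rule finite_measure_mono)
    show "{\<eta> \<in> space H. V0 \<eta> \<le> V1 \<eta> - \<beta> \<eta> * p} \<subseteq> {\<eta> \<in> space H. V0 \<eta> \<le> V1 \<eta> - \<beta> \<eta> * p'}"
    proof safe
      fix \<eta> assume "\<eta> \<in> space H" "V0 \<eta> \<le> V1 \<eta> - \<beta> \<eta> * p"
      moreover have "\<beta> \<eta> * p' \<le> \<beta> \<eta> * p" using bpos \<open>\<eta> \<in> space H\<close> that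
        by (intro mult_left_mono) auto
      ultimately show "V0 \<eta> \<le> V1 \<eta> - \<beta> \<eta> * p'" by linarith
    qed
    show "{\<eta> \<in> space H. V0 \<eta> \<le> V1 \<eta> - \<beta> \<eta> * p'} \<in> sets H" using m0 m1 mb by measurable
  qed
  have cons: "p \<in> prices_considered Y" if "0 \<le> p" "p \<le> y" "y \<in> Y" for p y
    unfolding prices_considered_def using that by auto
  define G where "G = cdf (distr H borel X)"
  have rdG: "real_distribution (distr H borel X)" using mX by simp
  have Geq: "G p = 1 - F p" if "p \<in> prices_considered Y" for p
  proof -
    let ?A = "{\<eta>\<in>space H. V0 \<eta> \<le> V1 \<eta> - \<beta> \<eta> * p}"
    let ?B = "{\<eta>\<in>space H. V0 \<eta> = V1 \<eta> - \<beta> \<eta> * p}"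
    have Am: "?A \<in> sets H" using m0 m1 mb by measurable
    have Bm: "?B \<in> sets H" using m0 m1 mb by measurable
    have key: "X \<eta> \<le> p \<longleftrightarrow> V1 \<eta> - \<beta> \<eta> * p \<le> V0 \<eta>" if "\<eta> \<in> space H" for \<eta>
    proof -
      have "\<beta> \<eta> > 0" using bpos that by auto
      then show ?thesis unfolding X_def by (simp add: pos_divide_le_eq algebra_simps)
    qed
    have "X -` {..p} \<inter> space H = (space H - ?A) \<union> ?B"
      using key by auto
    moreover have "G p = measure H (X -` {..p} \<inter> space H)"
      unfolding G_def cdf_def using mX by (simp add: measure_distr)
    moreover have "?B \<in> null_sets H" using z that Bm
      by (simp add: null_sets_def emeasure_eq_measure)
    ultimately have "G p = measure H (space H - ?A)"
      using measure_Un_null_set[of "space H - ?A" H ?B] Am by auto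
    also have "\<dots> = 1 - F p" unfolding F_def using prob_compl[OF Am] by simp
    finally show ?thesis .
  qed
  have pL0: "0 \<le> pL" and pHy: "\<And>y. y \<in> Y \<Longrightarrow> pH \<le> y" using pLH y0 by auto
  have F0: "F 0 = 1"
  proof -
    have "1 \<le> F 0"
    proof (rule tendsto_upperbound[OF limL[folded F_def]])
      show "\<forall>\<^sub>F i in at_right pL. F i \<le> F 0"
        using pL0 by (auto simp: eventually_at_right_less intro!: Fmono eventually_mono[OF eventually_at_right_less[of pL]])
    qed simp
    moreover have "F 0 \<le> 1" unfolding F_def by simp
    ultimately show ?thesis by simp
  qed
  have Fy: "F y = 0" if "y \<in> Y" for y
  proof -
    have "F y \<le> 0"
    proof (rule tendsto_lowerbound[OF limH[folded F_def]])
      show "\<forall>\<^sub>F i in at_left pH. F y \<le> F i"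
        using pHy[OF that] by (auto intro!: Fmono eventually_mono[OF eventually_at_left_real[of "pH - 1" pH]])
    qed simp
    moreover have "F y \<ge> 0" unfolding F_def by simp
    ultimately show ?thesis by simp
  qed
  have G0: "G 0 = 0" using Geq[OF cons[of 0 y0]] F0 y0 assms(1) by auto
    have "real_distribution (distr H borel X) \<and> G = cdf (distr H borel X)"
      using rdG G_def by simp
    then have c1: "is_CDF G" unfolding is_CDF_def by blast
    have c2: "\<forall>y\<in>Y. \<forall>p1. 0 \<le> p1 \<and> p1 \<le> y \<longrightarrow>
        q1 p1 = (if (0::real) < y - p1 then 1 else 0) * (1 - G p1)"
    proof (intro ballI allI impI)
      fix y p1 assume y: "y \<in> Y" and p: "0 \<le> p1 \<and> p1 \<le> y"
      have c: "p1 \<in> prices_considered Y" using cons p y by auto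
      have qF: "q1 p1 = F p1" using q c unfolding F_def by auto
      show "q1 p1 = (if (0::real) < y - p1 then 1 else 0) * (1 - G p1)"
      proof (cases "p1 < y")
        case True
        then show ?thesis using qF Geq[OF c] by simp
      next
        case False
        then have "p1 = y" using p by auto
        then show ?thesis using qF Fy[OF y] by simp
      qed
    qed
  have c3: "\<forall>y\<in>Y. \<exists>pbar. 0 \<le> pbar \<and> pbar \<le> y \<and> (0::real) \<ge> y - pbar"
  proof
    fix y :: real assume "y \<in> Y"
    then have "y > 0" using assms(1) by auto
    then show "\<exists>pbar. 0 \<le> pbar \<and> pbar \<le> y \<and> (0::real) \<ge> y - pbar"
      by (intro exI[of _ y]) auto
  qed
  show ?thesis unfolding APT_rationalizable_def
    apply (rule exI[of _ "\<lambda>_::real. 0::real"])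
    apply (rule exI[of _ "\<lambda>x::real. x"])
    apply (rule exI[of _ G])
    using c1 c2 c3 G0 by (auto simp: mono_on_def strict_mono_on_def continuous_on_id)
qed

end
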